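(* Let $X$ be a finite set and let $\tau$ be a slim collection of subsets of $X$, each of size at least 3. Then the collection $\mathcal{P}$ of all non-empty subsets $\tau'\subseteq\tau$ with ${\rm exc}'(\tau')=0$ is a patchwork: whenever $\tau_1,\tau_2\in\mathcal{P}$ and $\tau_1\cap\tau_2\neq\emptyset$, both $\tau_1\cap\tau_2$ and $\tau_1\cup\tau_2$ belong to $\mathcal{P}$.
   Context: $L(\tau)=\bigcup_{s\in\tau}s$. For a non-empty collection $\tau'$ of subsets of $X$ each of size at least 3, ${\rm exc}'(\tau')=|L(\tau')|-2-\sum_{s\in\tau'}(|s|-2)$. $\tau$ is slim if ${\rm exc}'(\tau')\ge0$ for every non-empty $\tau'\subseteq\tau$. *)

theory Defs
  imports Main
begin

definition L :: "'a set set \<Rightarrow> 'a set" where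
  "L \<tau> = \<Union>\<tau>"

definition exc' :: "'a set set \<Rightarrow> int" where
  "exc' \<tau>' = int (card (L \<tau>')) - 2 - (\<Sum>s\<in>\<tau>'. int (card s) - 2)"

definition slim :: "'a set set \<Rightarrow> bool" where
  "slim \<tau> \<longleftrightarrow> (\<forall>\<tau>'. \<tau>' \<subseteq> \<tau> \<and> \<tau>' \<noteq> {} \<longrightarrow> exc' \<tau>' \<ge> 0)"

definition patchwork :: "'b set set \<Rightarrow> bool" where
  "patchwork P \<longleftrightarrow> (\<forall>t1\<in>P. \<forall>t2\<in>P. t1 \<inter> t2 \<noteq> {} \<longrightarrow> t1 \<inter> t2 \<in> P \<and> t1 \<union> t2 \<in> P)"

end

theory Submission
  imports Defs
begin

theorem corollary3:
  fixes X :: "'a set" and \<tau> :: "'a set set"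
  assumes "finite X"
    and "\<forall>s\<in>\<tau>. s \<subseteq> X \<and> card s \<ge> 3"
    and "slim \<tau>"
  shows "patchwork {\<tau>'. \<tau>' \<subseteq> \<tau> \<and> \<tau>' \<noteq> {} \<and> exc' \<tau>' = 0}"
  unfolding patchwork_def
proof (intro ballI impI)
  fix A B assume a: "A \<in> {\<tau>'. \<tau>' \<subseteq> \<tau> \<and> \<tau>' \<noteq> {} \<and> exc' \<tau>' = 0}"
    and b: "B \<in> {\<tau>'. \<tau>' \<subseteq> \<tau> \<and> \<tau>' \<noteq> {} \<and> exc' \<tau>' = 0}"
    and ne: "A \<inter> B \<noteq> {}"
  have tf: "finite \<tau>" using assms(1,2)
    by (meson Pow_iff finite_Pow_iff rev_finite_subset subsetI)
  have fA: "finite A" and fB: "finite B" using a b tf finite_subset by auto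
  have LX: "\<And>C. C \<subseteq> \<tau> \<Longrightarrow> L C \<subseteq> X" using assms(2) unfolding L_def by auto
  have fLA: "finite (L A)" and fLB: "finite (L B)"
    using LX[of A] LX[of B] a b assms(1) finite_subset by auto
  have U: "L (A \<union> B) = L A \<union> L B" unfolding L_def by auto
  have I: "L (A \<inter> B) \<subseteq> L A \<inter> L B" unfolding L_def by auto
  have c1: "card (L A) + card (L B) = card (L A \<union> L B) + card (L A \<inter> L B)"
    using card_Un_Int[OF fLA fLB] .
  have c2: "card (L (A \<inter> B)) \<le> card (L A \<inter> L B)"
    using card_mono[OF _ I] fLA by auto
  have s: "(\<Sum>s\<in>A \<union> B. int (card s) - 2) + (\<Sum>s\<in>A \<inter> B. int (card s) - 2)
      = (\<Sum>s\<in>A. int (card s) - 2) + (\<Sum>s\<in>B. int (card s) - 2)"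
    using sum.union_inter[OF fA fB] .
  have le: "exc' (A \<union> B) + exc' (A \<inter> B) \<le> exc' A + exc' B"
    unfolding exc'_def U using c1 c2 s by linarith
  have sl: "\<And>C. C \<subseteq> \<tau> \<Longrightarrow> C \<noteq> {} \<Longrightarrow> exc' C \<ge> 0"
    using assms(3) unfolding slim_def by blast
  have g1: "exc' (A \<union> B) \<ge> 0" using sl[of "A \<union> B"] a b by auto
  have g2: "exc' (A \<inter> B) \<ge> 0" using sl[of "A \<inter> B"] a ne by auto
  have "exc' A = 0" "exc' B = 0" using a b by auto
  then have "exc' (A \<union> B) = 0" "exc' (A \<inter> B) = 0" using le g1 g2 by linarith+
  then show "A \<inter> B \<in> {\<tau>'. \<tau>' \<subseteq> \<tau> \<and> \<tau>' \<noteq> {} \<and> exc' \<tau>' = 0} \<and>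
         A \<union> B \<in> {\<tau>'. \<tau>' \<subseteq> \<tau> \<and> \<tau>' \<noteq> {} \<and> exc' \<tau>' = 0}"
    using a b ne by auto
qed

end
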